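(* There exists a function $f(n,w,d)$ such that for all positive integers $n,w,d$ the following holds. Let $G$ be a connected graph with $\Delta(G)\leq d$ and let $(T,\mathcal{Y})$ be a lean tree-decomposition of $G$ of width at most $w$. If $|V(G)|\geq f(n,w,d)$, then $T$ contains a path $P$ with interior vertices $t_1,\ldots,t_n$, occurring along $P$ in this order, such that: (i) for some positive integer $s\leq w+1$, $|Y_{t_i}|=s$ for all $i\in[n]$ and $|Y_t|\geq s$ for every vertex $t$ of $P$ between $t_1$ and $t_n$; and (ii) there is a set $U\subseteq V(G)$ with $Y_{t_i}\cap Y_{t_j}=U$ for all distinct $i,j\in[n]$.
   Context: All graphs are finite and loopless but may have parallel edges; $[n]=\{1,\dots,n\}$. A tree-decomposition of $G$ is a pair $(T,\mathcal{Y})$ where $T$ is a tree and $\mathcal{Y}=\{Y_t\}_{t\in V(T)}$ is a family of subsets of $V(G)$ (bags) such that (W1) $\bigcup_{t} Y_t=V(G)$ and every edge of $G$ has both ends in some $Y_t$; and (W2) if $t'$ lies on the path of $T$ between $t$ and $t''$ then $Y_t\cap Y_{t''}\subseteq Y_{t'}$. Its width is $\max_t(|Y_t|-1)$. It is lean if additionally: (W3) for every two vertices $t,t'$ of $T$ and every positive integer $k$, either $G$ has $k$ vertex-disjoint paths between $Y_t$ and $Y_{t'}$, or some vertex $t''$ on the path of $T$ between $t$ and $t'$ has $|Y_{t''}|<k$; (W4) distinct vertices $t\ne t'$ of $T$ have $Y_t\neq Y_{t'}$; (W5) if $t_0\in V(T)$ and $B$ is a component of $T-t_0$, then $\bigcup_{t\in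 V(B)}Y_t\setminus Y_{t_0}\neq\emptyset$. *)

theory Defs
  imports Main
begin

definition is_path :: "('a \<Rightarrow> 'a \<Rightarrow> bool) \<Rightarrow> 'a set \<Rightarrow> 'a list \<Rightarrow> bool" where
  "is_path adj S xs \<longleftrightarrow> xs \<noteq> [] \<and> distinct xs \<and> set xs \<subseteq> S \<and>
     (\<forall>i. Suc i < length xs \<longrightarrow> adj (xs ! i) (xs ! Suc i))"

text \<open>Multigraphs (parallel edges allowed, loopless): vertex set V, edge set E,
  and ends e = the set of the two ends of edge e.\<close>
definition multigraph :: "'v set \<Rightarrow> 'e set \<Rightarrow> ('e \<Rightarrow> 'v set) \<Rightarrow> bool" where
  "multigraph V E ends \<longleftrightarrow> finite V \<and> finite E \<and>
     (\<forall>e\<in>E. ends e \<subseteq> V \<and> card (ends e) = 2)"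

definition gadj :: "'e set \<Rightarrow> ('e \<Rightarrow> 'v set) \<Rightarrow> 'v \<Rightarrow> 'v \<Rightarrow> bool" where
  "gadj E ends x y \<longleftrightarrow> (\<exists>e\<in>E. ends e = {x, y})"

definition degree :: "'e set \<Rightarrow> ('e \<Rightarrow> 'v set) \<Rightarrow> 'v \<Rightarrow> nat" where
  "degree E ends v = card {e\<in>E. v \<in> ends e}"

definition max_degree_le :: "'v set \<Rightarrow> 'e set \<Rightarrow> ('e \<Rightarrow> 'v set) \<Rightarrow> nat \<Rightarrow> bool" where
  "max_degree_le V E ends d \<longleftrightarrow> (\<forall>v\<in>V. degree E ends v \<le> d)"

definition connected_graph :: "'v set \<Rightarrow> 'e set \<Rightarrow> ('e \<Rightarrow> 'v set) \<Rightarrow> bool" where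
  "connected_graph V E ends \<longleftrightarrow> V \<noteq> {} \<and>
     (\<forall>u\<in>V. \<forall>v\<in>V. \<exists>xs. is_path (gadj E ends) V xs \<and> hd xs = u \<and> last xs = v)"

definition disjoint_paths :: "'v set \<Rightarrow> 'e set \<Rightarrow> ('e \<Rightarrow> 'v set) \<Rightarrow> nat \<Rightarrow> 'v set \<Rightarrow> 'v set \<Rightarrow> bool" where
  "disjoint_paths V E ends k A B \<longleftrightarrow> (\<exists>Ps. length Ps = k \<and>
     (\<forall>P\<in>set Ps. is_path (gadj E ends) V P \<and> hd P \<in> A \<and> last P \<in> B) \<and>
     (\<forall>i<k. \<forall>j<k. i \<noteq> j \<longrightarrow> set (Ps ! i) \<inter> set (Ps ! j) = {}))"

definition is_tree :: "'i set \<Rightarrow> ('i \<Rightarrow> 'i \<Rightarrow> bool) \<Rightarrow> bool" where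
  "is_tree I TE \<longleftrightarrow> finite I \<and> I \<noteq> {} \<and>
     (\<forall>x y. TE x y \<longrightarrow> x \<in> I \<and> y \<in> I \<and> x \<noteq> y \<and> TE y x) \<and>
     (\<forall>u\<in>I. \<forall>v\<in>I. \<exists>xs. is_path TE I xs \<and> hd xs = u \<and> last xs = v) \<and>
     \<not> (\<exists>xs. is_path TE I xs \<and> length xs \<ge> 3 \<and> TE (last xs) (hd xs))"

definition on_tree_path :: "'i set \<Rightarrow> ('i \<Rightarrow> 'i \<Rightarrow> bool) \<Rightarrow> 'i \<Rightarrow> 'i \<Rightarrow> 'i \<Rightarrow> bool" where
  "on_tree_path I TE t t'' t' \<longleftrightarrow>
     (\<exists>xs. is_path TE I xs \<and> hd xs = t \<and> last xs = t'' \<and> t' \<in> set xs)"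

definition tree_decomposition ::
  "'v set \<Rightarrow> 'e set \<Rightarrow> ('e \<Rightarrow> 'v set) \<Rightarrow> 'i set \<Rightarrow> ('i \<Rightarrow> 'i \<Rightarrow> bool) \<Rightarrow> ('i \<Rightarrow> 'v set) \<Rightarrow> bool" where
  "tree_decomposition V E ends I TE Y \<longleftrightarrow> is_tree I TE \<and>
     (\<Union>t\<in>I. Y t) = V \<and> (\<forall>e\<in>E. \<exists>t\<in>I. ends e \<subseteq> Y t) \<and>
     (\<forall>t\<in>I. \<forall>t''\<in>I. \<forall>t'. on_tree_path I TE t t'' t' \<longrightarrow> Y t \<inter> Y t'' \<subseteq> Y t')"

definition td_width_le :: "'i set \<Rightarrow> ('i \<Rightarrow> 'v set) \<Rightarrow> nat \<Rightarrow> bool" where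
  "td_width_le I Y w \<longleftrightarrow> (\<forall>t\<in>I. card (Y t) \<le> w + 1)"

definition tree_minus_components :: "'i set \<Rightarrow> ('i \<Rightarrow> 'i \<Rightarrow> bool) \<Rightarrow> 'i \<Rightarrow> 'i set set" where
  "tree_minus_components I TE t0 =
     {{u\<in>I - {t0}. \<exists>xs. is_path TE (I - {t0}) xs \<and> hd xs = t \<and> last xs = u} | t. t \<in> I - {t0}}"

definition lean_tree_decomposition ::
  "'v set \<Rightarrow> 'e set \<Rightarrow> ('e \<Rightarrow> 'v set) \<Rightarrow> 'i set \<Rightarrow> ('i \<Rightarrow> 'i \<Rightarrow> bool) \<Rightarrow> ('i \<Rightarrow> 'v set) \<Rightarrow> bool" where
  "lean_tree_decomposition V E ends I TE Y \<longleftrightarrow> tree_decomposition V E ends I TE Y \<and>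
     (\<forall>t\<in>I. \<forall>t'\<in>I. \<forall>k>0. disjoint_paths V E ends k (Y t) (Y t') \<or>
        (\<exists>t''. on_tree_path I TE t t' t'' \<and> card (Y t'') < k)) \<and>
     (\<forall>t\<in>I. \<forall>t'\<in>I. t \<noteq> t' \<longrightarrow> Y t \<noteq> Y t') \<and>
     (\<forall>t0\<in>I. \<forall>B\<in>tree_minus_components I TE t0. (\<Union>t\<in>B. Y t) - Y t0 \<noteq> {})"

end

theory Submission
  imports Defs
begin

lemma is_path_succ: "is_path adj S xs \<longleftrightarrow> xs \<noteq> [] \<and> distinct xs \<and> set xs \<subseteq> S \<and> successively adj xs"
  unfolding is_path_def successively_conv_nth by blast

lemma walk_to_path:
  "xs \<noteq> [] \<Longrightarrow> set xs \<subseteq> S \<Longrightarrow> successively adj xs \<Longrightarrow>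
   \<exists>ys. is_path adj S ys \<and> hd ys = hd xs \<and> last ys = last xs \<and> set ys \<subseteq> set xs"
proof (induction "length xs" arbitrary: xs rule: less_induct)
  case less
  show ?case
  proof (cases "distinct xs")
    case True thus ?thesis using less.prems by (auto simp: is_path_succ)
  next
    case False
    then obtain as bs cs y where xs: "xs = as@[y]@bs@[y]@cs" using not_distinct_decomp by blast
    let ?zs = "as@[y]@cs"
    have "successively adj ?zs"
      using less.prems(3) unfolding xs
      by (auto simp: successively_append_iff successively_Cons split: if_splits)
    moreover have "hd ?zs = hd xs" "last ?zs = last xs" unfolding xs
      by (cases as; simp) (cases cs; simp)
    moreover have "length ?zs < length xs" "set ?zs \<subseteq> set xs" unfolding xs by auto
    ultimately show ?thesis using less.hyps[of ?zs] less.prems by fastforce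
  qed
qed

definition reach where
  "reach adj S u v \<longleftrightarrow> (\<exists>xs. is_path adj S xs \<and> hd xs = u \<and> last xs = v)"

lemma reach_walk: "reach adj S u v \<longleftrightarrow> (\<exists>xs. xs \<noteq> [] \<and> set xs \<subseteq> S \<and> successively adj xs \<and> hd xs = u \<and> last xs = v)"
  unfolding reach_def by (metis is_path_succ walk_to_path)

lemma reach_refl: "u \<in> S \<Longrightarrow> reach adj S u u"
  unfolding reach_def by (rule exI[of _ "[u]"]) (simp add: is_path_succ)

lemma reach_trans: "reach adj S u v \<Longrightarrow> reach adj S v x \<Longrightarrow> reach adj S u x"
  unfolding reach_walk
proof (elim exE conjE)
  fix xs ys assume a: "xs \<noteq> []" "set xs \<subseteq> S" "successively adj xs" "hd xs = u" "last xs = v"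
    and b: "ys \<noteq> []" "set ys \<subseteq> S" "successively adj ys" "hd ys = v" "last ys = x"
  show "\<exists>xs. xs \<noteq> [] \<and> set xs \<subseteq> S \<and> successively adj xs \<and> hd xs = u \<and> last xs = x"
  proof (intro exI[of _ "xs @ tl ys"] conjI)
    show "successively adj (xs @ tl ys)" using a b
      by (cases ys; cases "tl ys") (auto simp: successively_append_iff)
    show "last (xs @ tl ys) = x" using a b by (cases ys; cases "tl ys") auto
  qed (use a b in \<open>auto dest: list.set_sel(2)\<close>)
qed

lemma reach_sym: "(\<And>x y. adj x y \<Longrightarrow> adj y x) \<Longrightarrow> reach adj S u v \<Longrightarrow> reach adj S v u"
  unfolding reach_walk
proof (elim exE conjE)
  fix xs assume s: "\<And>x y. adj x y \<Longrightarrow> adj y x" and a: "xs \<noteq> []" "set xs \<subseteq> S" "successively adj xs" "hd xs = u" "last xs = v"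
  have "successively adj (rev xs)" using a(3) by (simp add: successively_mono s)
  thus "\<exists>xs. xs \<noteq> [] \<and> set xs \<subseteq> S \<and> successively adj xs \<and> hd xs = v \<and> last xs = u"
    using a by (intro exI[of _ "rev xs"]) (auto simp: hd_rev last_rev)
qed

lemma reach_in: "reach adj S u v \<Longrightarrow> u \<in> S \<and> v \<in> S"
  unfolding reach_def is_path_succ by auto



fun Nf :: "nat \<Rightarrow> nat \<Rightarrow> nat" where
  "Nf n 0 = n" | "Nf n (Suc b) = n * (Nf n b + 1)"

lemma sunfl:
  assumes "n \<ge> 1"
  shows "finite (K::nat set) \<Longrightarrow> card K \<ge> Nf n b \<Longrightarrow> (\<forall>k\<in>K. finite (X k) \<and> card (X k) \<le> b) \<Longrightarrow>
    (\<forall>i\<in>K. \<forall>j\<in>K. \<forall>k\<in>K. i < j \<longrightarrow> j < k \<longrightarrow> X i \<inter> X k \<subseteq> X j) \<Longrightarrow>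
    \<exists>K'\<subseteq>K. card K' = n \<and> (\<exists>U. \<forall>i\<in>K'. \<forall>j\<in>K'. i \<noteq> j \<longrightarrow> X i \<inter> X j = U)"
proof (induction b arbitrary: X K)
  case 0
  obtain K' where "K' \<subseteq> K" "card K' = n" using obtain_subset_with_card_n[of n K] 0(2) by auto
  moreover have "\<forall>k\<in>K. X k = {}" using 0 by auto
  ultimately show ?case by blast
next
  case (Suc b)
  let ?N = "Nf n b"
  note outer = Suc.IH
  have Nge: "?N \<ge> 1" using assms by (induction b) auto
  have Q: "\<And>K. finite K \<Longrightarrow> card K \<ge> r * (?N + 1) \<Longrightarrow> (\<forall>k\<in>K. finite (X k) \<and> card (X k) \<le> Suc b) \<Longrightarrow>
    (\<forall>i\<in>K. \<forall>j\<in>K. \<forall>k\<in>K. i < j \<longrightarrow> j < k \<longrightarrow> X i \<inter> X k \<subseteq> X j) \<Longrightarrow>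
    (\<exists>K'\<subseteq>K. card K' = n \<and> (\<exists>U. \<forall>i\<in>K'. \<forall>j\<in>K'. i \<noteq> j \<longrightarrow> X i \<inter> X j = U)) \<or>
    (\<exists>D\<subseteq>K. card D = r \<and> (\<forall>i\<in>D. \<forall>j\<in>D. i \<noteq> j \<longrightarrow> X i \<inter> X j = {}))" for r
  proof (induction r)
    case 0 thus ?case by (intro disjI2 exI[of _ "{}"]) auto
  next
    case (Suc r K)
    have "K \<noteq> {}" using Suc.prems(2) Nge by auto
    define i0 where "i0 = Min K"
    have i0K: "i0 \<in> K" and i0min: "\<And>j. j \<in> K \<Longrightarrow> i0 \<le> j"
      using Suc.prems(1) \<open>K \<noteq> {}\<close> by (auto simp: i0_def)
    define A where "A = {j\<in>K. i0 < j \<and> X i0 \<inter> X j \<noteq> {}}"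
    have AK: "A \<subseteq> K - {i0}" unfolding A_def by auto
    have finA: "finite A" using finite_subset[OF AK] Suc.prems(1) by simp
    show ?case
    proof (cases "card A \<ge> ?N")
      case True
      hence "A \<noteq> {}" using Nge by auto
      define jm where "jm = Max A"
      have jmA: "jm \<in> A" and jmmax: "\<And>j. j \<in> A \<Longrightarrow> j \<le> jm"
        using finA \<open>A \<noteq> {}\<close> by (auto simp: jm_def)
      define C where "C = X i0 \<inter> X jm"
      have Cne: "C \<noteq> {}" using jmA unfolding A_def C_def by auto
      have CA: "C \<subseteq> X j" if "j \<in> A" for j
      proof (cases "j = jm")
        case True thus ?thesis unfolding C_def by auto
      next
        case False
        hence "j < jm" using jmmax that by fastforce
        thus ?thesis using Suc.prems(4) i0K that jmA unfolding A_def C_def by auto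
      qed
      have "\<exists>K'\<subseteq>A. card K' = n \<and> (\<exists>U. \<forall>i\<in>K'. \<forall>j\<in>K'. i \<noteq> j \<longrightarrow> (\<lambda>j. X j - C) i \<inter> (\<lambda>j. X j - C) j = U)"
      proof (rule outer[OF finA True])
        show "\<forall>k\<in>A. finite (X k - C) \<and> card (X k - C) \<le> b"
        proof
          fix k assume "k \<in> A"
          hence f: "finite (X k)" "card (X k) \<le> Suc b" using AK Suc.prems(3) by auto
          have "card C \<ge> 1" using Cne f CA[OF \<open>k\<in>A\<close>] by (simp add: Suc_le_eq card_gt_0_iff finite_subset)
          moreover have "card (X k - C) = card (X k) - card C" using card_Diff_subset[OF finite_subset[OF CA[OF \<open>k\<in>A\<close>] f(1)] CA[OF \<open>k\<in>A\<close>]] .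
          ultimately show "finite (X k - C) \<and> card (X k - C) \<le> b" using f by auto
        qed
        show "\<forall>i\<in>A. \<forall>j\<in>A. \<forall>k\<in>A. i < j \<longrightarrow> j < k \<longrightarrow> (X i - C) \<inter> (X k - C) \<subseteq> X j - C"
          using Suc.prems(4) AK by blast
      qed
      then obtain K' U where K': "K' \<subseteq> A" "card K' = n" "\<forall>i\<in>K'. \<forall>j\<in>K'. i \<noteq> j \<longrightarrow> (X i - C) \<inter> (X j - C) = U"
        by auto
      have "\<forall>i\<in>K'. \<forall>j\<in>K'. i \<noteq> j \<longrightarrow> X i \<inter> X j = U \<union> C"
      proof (intro ballI impI)
        fix i j assume "i \<in> K'" "j \<in> K'" "i \<noteq> j"
        hence "C \<subseteq> X i" "C \<subseteq> X j" using CA K'(1) by auto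
        thus "X i \<inter> X j = U \<union> C" using K'(3) \<open>i \<in> K'\<close> \<open>j \<in> K'\<close> \<open>i \<noteq> j\<close> by blast
      qed
      thus ?thesis using K' AK by (intro disjI1 exI[of _ K']) blast
    next
      case False
      define R where "R = K - {i0} - A"
      have RK: "R \<subseteq> K" unfolding R_def by auto
      have c1: "card (K - {i0}) = card K - 1" using card_Diff_singleton[OF i0K] .
      have "card R = card (K - {i0}) - card A"
        unfolding R_def using card_Diff_subset[OF finA AK] .
      hence cRe: "card R = card K - 1 - card A" using c1 by simp
      have m1: "Suc r * (?N + 1) = r * (?N + 1) + ?N + 1" by simp
      have "card A + 1 \<le> ?N" using False by simp
      hence cR: "card R \<ge> r * (?N + 1)" using Suc.prems(2) cRe m1 by linarith
      have "(\<exists>K'\<subseteq>R. card K' = n \<and> (\<exists>U. \<forall>i\<in>K'. \<forall>j\<in>K'. i \<noteq> j \<longrightarrow> X i \<inter> X j = U)) \<or>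
        (\<exists>D\<subseteq>R. card D = r \<and> (\<forall>i\<in>D. \<forall>j\<in>D. i \<noteq> j \<longrightarrow> X i \<inter> X j = {}))"
      proof (rule Suc.IH[OF finite_subset[OF RK Suc.prems(1)] cR])
        show "\<forall>k\<in>R. finite (X k) \<and> card (X k) \<le> Suc b" using Suc.prems(3) RK by blast
        show "\<forall>i\<in>R. \<forall>j\<in>R. \<forall>k\<in>R. i < j \<longrightarrow> j < k \<longrightarrow> X i \<inter> X k \<subseteq> X j"
          using Suc.prems(4) RK by blast
      qed
      thus ?thesis
      proof
        assume "\<exists>K'\<subseteq>R. card K' = n \<and> (\<exists>U. \<forall>i\<in>K'. \<forall>j\<in>K'. i \<noteq> j \<longrightarrow> X i \<inter> X j = U)"
        then obtain K' U where "K' \<subseteq> R" "card K' = n" "\<forall>i\<in>K'. \<forall>j\<in>K'. i \<noteq> j \<longrightarrow> X i \<inter> X j = U" by blast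
        hence "K' \<subseteq> K \<and> card K' = n \<and> (\<forall>i\<in>K'. \<forall>j\<in>K'. i \<noteq> j \<longrightarrow> X i \<inter> X j = U)" using RK by blast
        thus ?thesis by blast
      next
        assume "\<exists>D\<subseteq>R. card D = r \<and> (\<forall>i\<in>D. \<forall>j\<in>D. i \<noteq> j \<longrightarrow> X i \<inter> X j = {})"
        then obtain D where D: "D \<subseteq> R" "card D = r" "\<forall>i\<in>D. \<forall>j\<in>D. i \<noteq> j \<longrightarrow> X i \<inter> X j = {}" by blast
        have disj: "X i0 \<inter> X j = {}" if "j \<in> D" for j
        proof -
          have "j \<in> K" "j \<noteq> i0" "j \<notin> A" using D(1) that unfolding R_def by auto
          thus ?thesis using i0min[of j] unfolding A_def by auto
        qed
        have "i0 \<notin> D" using D(1) unfolding R_def by auto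
        moreover have "finite D" using finite_subset[OF order.trans[OF D(1) RK] Suc.prems(1)] .
        ultimately have "card (insert i0 D) = Suc r" using D(2) by simp
        moreover have "\<forall>i\<in>insert i0 D. \<forall>j\<in>insert i0 D. i \<noteq> j \<longrightarrow> X i \<inter> X j = {}"
        proof (intro ballI impI)
          fix i j assume ij: "i \<in> insert i0 D" "j \<in> insert i0 D" "i \<noteq> j"
          show "X i \<inter> X j = {}"
          proof (cases "i = i0")
            case True thus ?thesis using ij disj by auto
          next
            case False
            show ?thesis
            proof (cases "j = i0")
              case True thus ?thesis using ij disj[of i] False by auto
            next
              case False2: False
              thus ?thesis using ij False D(3) by auto
            qed
          qed
        qed
        ultimately show ?thesis using D(1) RK i0K by (intro disjI2 exI[of _ "insert i0 D"]) auto
      qed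
    qed
  qed
  have "n * (Nf n b + 1) \<le> card K" using Suc.prems(2) by simp
  from Q[of K n, OF Suc.prems(1) this Suc.prems(3,4)] show ?case
  proof
    assume "\<exists>D\<subseteq>K. card D = n \<and> (\<forall>i\<in>D. \<forall>j\<in>D. i \<noteq> j \<longrightarrow> X i \<inter> X j = {})"
    then obtain D where "D\<subseteq>K" "card D = n" "\<forall>i\<in>D. \<forall>j\<in>D. i \<noteq> j \<longrightarrow> X i \<inter> X j = {}" by blast
    thus ?case by blast
  qed
qed



fun Rm :: "nat \<Rightarrow> nat \<Rightarrow> nat" where
  "Rm m 0 = 1" | "Rm m (Suc c) = m * (Rm m c + 1)"

lemma minram:
  fixes g :: "nat \<Rightarrow> nat"
  shows "len \<ge> Rm m c \<Longrightarrow> (\<forall>k. lo \<le> k \<and> k < lo + len \<longrightarrow> p < g k \<and> g k \<le> p + c) \<Longrightarrow>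
    \<exists>s K. p < s \<and> K \<subseteq> {lo..<lo+len} \<and> card K = m \<and> (\<forall>k\<in>K. g k = s) \<and>
      (\<forall>k i j. i \<in> K \<longrightarrow> j \<in> K \<longrightarrow> i \<le> k \<longrightarrow> k \<le> j \<longrightarrow> s \<le> g k)"
proof (induction c arbitrary: p lo len)
  case 0
  have "lo < lo + len" using 0(1) by simp
  hence "p < g lo \<and> g lo \<le> p + 0" using 0(2) by blast
  thus ?case by simp
next
  case (Suc c)
  let ?R = "Rm m c"
  note outer = Suc.IH
  let ?C = "\<lambda>lo len. \<exists>s K. p < s \<and> K \<subseteq> {lo..<lo+len} \<and> card K = m \<and> (\<forall>k\<in>K. g k = s) \<and>
      (\<forall>k i j. i \<in> K \<longrightarrow> j \<in> K \<longrightarrow> i \<le> k \<longrightarrow> k \<le> j \<longrightarrow> s \<le> g k)"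
  have Q: "\<And>lo len. len \<ge> r * (?R + 1) \<Longrightarrow> (\<forall>k. lo \<le> k \<and> k < lo + len \<longrightarrow> p < g k \<and> g k \<le> p + Suc c) \<Longrightarrow>
     ?C lo len \<or> (\<exists>S\<subseteq>{lo..<lo+len}. card S = r \<and> (\<forall>k\<in>S. g k = Suc p))" for r
  proof (induction r)
    case 0 thus ?case by (intro disjI2 exI[of _ "{}"]) auto
  next
    case (Suc r lo len)
    show ?case
    proof (cases "\<exists>k0. lo \<le> k0 \<and> k0 < lo + ?R \<and> g k0 = Suc p")
      case False
      have RL: "?R \<le> len" using Suc.prems(1) by (simp add: algebra_simps)
      have "\<forall>k. lo \<le> k \<and> k < lo + ?R \<longrightarrow> Suc p < g k \<and> g k \<le> Suc p + c"
      proof (intro allI impI)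
        fix k assume k: "lo \<le> k \<and> k < lo + ?R"
        hence "lo \<le> k \<and> k < lo + len" using RL by simp
        hence "p < g k \<and> g k \<le> p + Suc c" using Suc.prems(2) by blast
        moreover have "g k \<noteq> Suc p" using False k by blast
        ultimately show "Suc p < g k \<and> g k \<le> Suc p + c" by simp
      qed
      from outer[OF order.refl this] obtain s K where
        sK: "Suc p < s" "K \<subseteq> {lo..<lo+?R}" "card K = m" "\<forall>k\<in>K. g k = s"
           "\<forall>k i j. i \<in> K \<longrightarrow> j \<in> K \<longrightarrow> i \<le> k \<longrightarrow> k \<le> j \<longrightarrow> s \<le> g k" by blast
      have "K \<subseteq> {lo..<lo+len}" using sK(2) Suc.prems(1) by auto
      thus ?thesis using sK by (intro disjI1 exI[of _ s] exI[of _ K]) auto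
    next
      case True
      then obtain k0 where k0: "lo \<le> k0" "k0 < lo + ?R" "g k0 = Suc p" by blast
      have l2: "len - ?R \<ge> r * (?R + 1)" using Suc.prems(1) by (simp add: algebra_simps)
      have RL: "?R \<le> len" using Suc.prems(1) by (simp add: algebra_simps)
      hence eq: "lo + ?R + (len - ?R) = lo + len" by simp
      have "\<forall>k. lo + ?R \<le> k \<and> k < lo + ?R + (len - ?R) \<longrightarrow> p < g k \<and> g k \<le> p + Suc c"
        unfolding eq using Suc.prems(2) by simp
      from Suc.IH[OF l2 this] show ?thesis
      proof
        assume "?C (lo + ?R) (len - ?R)"
        then obtain s K where sK: "p < s" "K \<subseteq> {lo+?R..<lo+?R+(len-?R)}" "card K = m" "\<forall>k\<in>K. g k = s"
          "\<forall>k i j. i \<in> K \<longrightarrow> j \<in> K \<longrightarrow> i \<le> k \<longrightarrow> k \<le> j \<longrightarrow> s \<le> g k" by blast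
        moreover have "{lo+?R..<lo+?R+(len-?R)} \<subseteq> {lo..<lo+len}" unfolding eq by auto
        ultimately have "K \<subseteq> {lo..<lo+len}" by blast
        thus ?thesis using sK by (intro disjI1 exI[of _ s] exI[of _ K]) simp
      next
        assume "\<exists>S\<subseteq>{lo + ?R..<lo + ?R + (len - ?R)}. card S = r \<and> (\<forall>k\<in>S. g k = Suc p)"
        then obtain S where S: "S \<subseteq> {lo + ?R..<lo + ?R + (len - ?R)}" "card S = r" "\<forall>k\<in>S. g k = Suc p" by blast
        have "k0 \<notin> S" using S(1) k0 by auto
        moreover have "finite S" using S(1) finite_subset finite_atLeastLessThan by metis
        ultimately have "card (insert k0 S) = Suc r" using S(2) by simp
        moreover have "insert k0 S \<subseteq> {lo..<lo+len}" using S(1) k0 RL unfolding eq by auto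
        ultimately show ?thesis using S(3) k0(3) by (intro disjI2 exI[of _ "insert k0 S"]) auto
      qed
    qed
  qed
  from Q[of m len lo] Suc.prems have "?C lo len \<or> (\<exists>S\<subseteq>{lo..<lo+len}. card S = m \<and> (\<forall>k\<in>S. g k = Suc p))"
    by simp
  thus ?case
  proof
    assume "\<exists>S\<subseteq>{lo..<lo+len}. card S = m \<and> (\<forall>k\<in>S. g k = Suc p)"
    then obtain S where S: "S\<subseteq>{lo..<lo+len}" "card S = m" "\<forall>k\<in>S. g k = Suc p" by blast
    have "\<forall>k i j. i \<in> S \<longrightarrow> j \<in> S \<longrightarrow> i \<le> k \<longrightarrow> k \<le> j \<longrightarrow> Suc p \<le> g k"
    proof (intro allI impI)
      fix k i j assume "i \<in> S" "j \<in> S" "i \<le> k" "k \<le> j"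
      hence "lo \<le> k \<and> k < lo + len" using S(1) by fastforce
      thus "Suc p \<le> g k" using Suc.prems(2) by (simp add: Suc_le_eq)
    qed
    thus ?thesis using S by (intro exI[of _ "Suc p"] exI[of _ S]) auto
  qed
qed



locale setting =
  fixes V :: "'v set" and E :: "'e set" and ends :: "'e \<Rightarrow> 'v set"
    and I :: "'i set" and TE :: "'i \<Rightarrow> 'i \<Rightarrow> bool" and Y :: "'i \<Rightarrow> 'v set" and w d :: nat
  assumes mg: "multigraph V E ends" and conn: "connected_graph V E ends"
    and deg: "max_degree_le V E ends d"
    and td: "tree_decomposition V E ends I TE Y"
    and w5: "\<forall>t0\<in>I. \<forall>B\<in>tree_minus_components I TE t0. (\<Union>t\<in>B. Y t) - Y t0 \<noteq> {}"
    and wid: "td_width_le I Y w"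
begin

lemma tree: "is_tree I TE" using td unfolding tree_decomposition_def by blast
lemma finI: "finite I" using tree unfolding is_tree_def by blast
lemma TEin: "TE x y \<Longrightarrow> x \<in> I \<and> y \<in> I \<and> x \<noteq> y" using tree unfolding is_tree_def by blast
lemma TEsym: "TE x y \<Longrightarrow> TE y x" using tree unfolding is_tree_def by blast
lemma tconn: "u \<in> I \<Longrightarrow> v \<in> I \<Longrightarrow> reach TE I u v" using tree unfolding is_tree_def reach_def by blast
lemma acyc: "\<not> (is_path TE I xs \<and> length xs \<ge> 3 \<and> TE (last xs) (hd xs))"
  using tree unfolding is_tree_def by blast
lemma VY: "V = (\<Union>t\<in>I. Y t)" using td unfolding tree_decomposition_def by blast
lemma Ysub: "t \<in> I \<Longrightarrow> Y t \<subseteq> V" using VY by blast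
lemma finV: "finite V" using mg unfolding multigraph_def by blast
lemma finE: "finite E" using mg unfolding multigraph_def by blast
lemma edge_bag: "e \<in> E \<Longrightarrow> \<exists>t\<in>I. ends e \<subseteq> Y t" using td unfolding tree_decomposition_def by blast
lemma W2: "t \<in> I \<Longrightarrow> t'' \<in> I \<Longrightarrow> on_tree_path I TE t t'' t' \<Longrightarrow> Y t \<inter> Y t'' \<subseteq> Y t'"
  using td unfolding tree_decomposition_def by blast
lemma Gconn: "u \<in> V \<Longrightarrow> v \<in> V \<Longrightarrow> \<exists>xs. is_path (gadj E ends) V xs \<and> hd xs = u \<and> last xs = v"
  using conn unfolding connected_graph_def by blast

definition comp where "comp t a = {u \<in> I - {t}. reach TE (I - {t}) a u}"
definition priv where "priv t a = (\<Union>c\<in>comp t a. Y c) - Y t"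

lemma comp_sub: "comp t a \<subseteq> I - {t}" unfolding comp_def by blast

lemma priv_ne: "t \<in> I \<Longrightarrow> a \<in> I - {t} \<Longrightarrow> priv t a \<noteq> {}"
proof -
  assume t: "t \<in> I" and a: "a \<in> I - {t}"
  have "comp t a \<in> tree_minus_components I TE t"
    unfolding tree_minus_components_def comp_def reach_def using a by blast
  thus ?thesis using w5 t unfolding priv_def by blast
qed

lemma priv_V: "t \<in> I \<Longrightarrow> priv t a \<subseteq> V"
  unfolding priv_def using comp_sub Ysub by blast

lemma nbr_sep: assumes "TE t a" "TE t b" "a \<noteq> b" shows "\<not> reach TE (I - {t}) a b"
proof
  assume "reach TE (I - {t}) a b"
  then obtain xs where xs: "is_path TE (I - {t}) xs" "hd xs = a" "last xs = b" unfolding reach_def by blast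
  have xs': "xs \<noteq> []" "distinct xs" "set xs \<subseteq> I - {t}" "successively TE xs" using xs(1) unfolding is_path_succ by auto
  have tI: "t \<in> I" using TEin assms(1) by blast
  have "is_path TE I (t # xs)" unfolding is_path_succ
    using xs' xs(2) assms(1) tI by (cases xs) auto
  moreover have "length xs \<ge> 2"
  proof (rule ccontr)
    assume "\<not> length xs \<ge> 2"
    moreover have "length xs \<noteq> 0" using xs'(1) by simp
    ultimately have "length xs = 1" by linarith
    then obtain y where "xs = [y]" by (cases xs) auto
    thus False using xs assms(3) by simp
  qed
  hence "length (t # xs) \<ge> 3" by simp
  moreover have "TE (last (t # xs)) (hd (t # xs))" using xs(3) xs'(1) TEsym[OF assms(2)] by simp
  ultimately show False using acyc by blast
qed

lemma reach_symT: assumes "reach TE S u v" shows "reach TE S v u"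
proof (rule reach_sym[OF _ assms])
  fix x y assume "TE x y" thus "TE y x" by (rule TEsym)
qed

lemma comp_same: assumes "b \<in> comp t a" shows "comp t b = comp t a"
proof -
  have r: "reach TE (I - {t}) a b" using assms unfolding comp_def by blast
  have r': "reach TE (I - {t}) b a" using reach_symT[OF r] .
  show ?thesis
  proof (rule set_eqI)
    fix u
    have "reach TE (I - {t}) b u \<longleftrightarrow> reach TE (I - {t}) a u"
    proof
      assume "reach TE (I - {t}) b u" thus "reach TE (I - {t}) a u" by (rule reach_trans[OF r])
    next
      assume "reach TE (I - {t}) a u" thus "reach TE (I - {t}) b u" by (rule reach_trans[OF r'])
    qed
    thus "u \<in> comp t b \<longleftrightarrow> u \<in> comp t a" unfolding comp_def by simp
  qed
qed

lemma comp_self: "a \<in> I - {t} \<Longrightarrow> a \<in> comp t a"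
  unfolding comp_def using reach_refl[of a "I - {t}" TE] by simp

lemma comp_path: assumes "t \<in> I" "u \<in> I - {t}" "v \<in> I - {t}" "v \<notin> comp t u"
  shows "on_tree_path I TE u v t"
proof -
  have "reach TE I u v" using tconn[of u v] assms(2,3) by simp
  then obtain xs where xs: "is_path TE I xs" "hd xs = u" "last xs = v"
    unfolding reach_def by blast
  show ?thesis
  proof (cases "t \<in> set xs")
    case True thus ?thesis unfolding on_tree_path_def using xs by blast
  next
    case False
    hence "is_path TE (I - {t}) xs" using xs(1) unfolding is_path_succ by blast
    hence "v \<in> comp t u" unfolding comp_def reach_def using xs assms(3) by blast
    thus ?thesis using assms(4) by blast
  qed
qed

lemma P1: assumes "t \<in> I" "b \<in> comp t a" "c \<in> I - {t}" "c \<notin> comp t a" "x \<in> Y b" "x \<in> Y c"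
  shows "x \<in> Y t"
proof -
  have bI: "b \<in> I - {t}" using assms(2) comp_sub by blast
  have "c \<notin> comp t b" using comp_same[OF assms(2)] assms(4) by simp
  hence "on_tree_path I TE b c t" using comp_path assms(1,3) bI by blast
  hence "Y b \<inter> Y c \<subseteq> Y t" using W2 bI assms(3) by blast
  thus ?thesis using assms(5,6) by blast
qed

lemma P2: assumes "t \<in> I" "x \<in> priv t a" "e \<in> E" "ends e = {x, v}" "v \<notin> Y t"
  shows "v \<in> priv t a"
proof -
  obtain c where c: "c \<in> I" "ends e \<subseteq> Y c" using edge_bag assms(3) by blast
  obtain b where b: "b \<in> comp t a" "x \<in> Y b" "x \<notin> Y t" using assms(2) unfolding priv_def by blast
  have xc: "x \<in> Y c" "v \<in> Y c" using c(2) assms(4) by auto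
  have "c \<noteq> t" using xc b(3) by blast
  show ?thesis
  proof (cases "c \<in> comp t a")
    case True thus ?thesis unfolding priv_def using xc assms(5) by blast
  next
    case False
    have "x \<in> Y t" using P1[OF assms(1) b(1) _ False b(2) xc(1)] c(1) \<open>c \<noteq> t\<close> by blast
    thus ?thesis using b(3) by blast
  qed
qed

lemma P3: assumes "t \<in> I"
  shows "xs \<noteq> [] \<Longrightarrow> successively (gadj E ends) xs \<Longrightarrow> hd xs \<in> priv t a \<Longrightarrow>
    (\<forall>v\<in>set xs. v \<in> priv t a) \<or> (\<exists>e\<in>E. \<exists>x' z. ends e = {x', z} \<and> x' \<in> priv t a \<and> z \<in> Y t)"
proof (induction xs)
  case Nil thus ?case by simp
next
  case (Cons x ys)
  show ?case
  proof (cases ys)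
    case Nil thus ?thesis using Cons.prems by simp
  next
    case (Cons y zs)
    have g: "gadj E ends x y" and sy: "successively (gadj E ends) ys"
      using Cons.prems(2) \<open>ys = y # zs\<close> by auto
    obtain e where e: "e \<in> E" "ends e = {x, y}" using g unfolding gadj_def by blast
    have xp: "x \<in> priv t a" using Cons.prems(3) by simp
    show ?thesis
    proof (cases "y \<in> Y t")
      case True thus ?thesis using e xp by blast
    next
      case False
      hence "y \<in> priv t a" using P2[OF assms xp e] by blast
      hence "(\<forall>v\<in>set ys. v \<in> priv t a) \<or> (\<exists>e\<in>E. \<exists>x' z. ends e = {x', z} \<and> x' \<in> priv t a \<and> z \<in> Y t)"
        using Cons.IH sy \<open>ys = y # zs\<close> by simp
      thus ?thesis using xp by auto
    qed
  qed
qed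

lemma sep_comp: assumes "TE t a" "TE t b" "a \<noteq> b" "c \<in> comp t b" shows "c \<notin> comp t a"
proof
  assume "c \<in> comp t a"
  hence "comp t c = comp t a" using comp_same by blast
  moreover have "comp t c = comp t b" using comp_same assms(4) by blast
  moreover have "b \<in> I - {t}" using TEin assms(2) by blast
  ultimately have "b \<in> comp t a" using comp_self by blast
  thus False using nbr_sep[OF assms(1-3)] unfolding comp_def by blast
qed

lemma priv_disj: assumes "TE t a" "TE t b" "a \<noteq> b" "x \<in> priv t a" "x \<in> priv t b" shows False
proof -
  have tI: "t \<in> I" using TEin assms(1) by blast
  obtain c where c: "c \<in> comp t a" "x \<in> Y c" "x \<notin> Y t" using assms(4) unfolding priv_def by blast
  obtain c' where c': "c' \<in> comp t b" "x \<in> Y c'" using assms(5) unfolding priv_def by blast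
  have "c' \<notin> comp t a" using sep_comp[OF assms(1-3) c'(1)] .
  moreover have "c' \<in> I - {t}" using c'(1) comp_sub by blast
  ultimately have "x \<in> Y t" using P1[OF tI c(1) _ _ c(2) c'(2)] by blast
  thus False using c(3) by blast
qed

lemma two_nbrs: assumes "TE t a" "TE t b" "a \<noteq> b"
  shows "\<exists>e\<in>E. \<exists>x' z. ends e = {x', z} \<and> x' \<in> priv t a \<and> z \<in> Y t"
proof -
  have tI: "t \<in> I" and aI: "a \<in> I - {t}" and bI: "b \<in> I - {t}" using TEin assms by auto
  obtain x where x: "x \<in> priv t a" using priv_ne[OF tI aI] by blast
  obtain y where y: "y \<in> priv t b" using priv_ne[OF tI bI] by blast
  obtain xs where xs: "is_path (gadj E ends) V xs" "hd xs = x" "last xs = y"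
    using Gconn priv_V[OF tI] x y by blast
  have xs': "xs \<noteq> []" "successively (gadj E ends) xs" using xs(1) unfolding is_path_succ by auto
  have "y \<in> set xs" using xs(3) xs'(1) by auto
  moreover have "y \<notin> priv t a" using priv_disj[OF assms] y by blast
  ultimately show ?thesis using P3[OF tI xs'] x xs(2) by blast
qed

lemma nonempty_bag: assumes "TE t a" "TE t b" "a \<noteq> b" shows "Y t \<noteq> {}"
  using two_nbrs[OF assms] by blast

end


context setting begin

lemma nbr_bound: assumes d1: "d \<ge> 1" and tI: "t \<in> I" shows "card {b. TE t b} \<le> (w+1)*d"
proof -
  let ?N = "{b. TE t b}"
  have finN: "finite ?N" using finite_subset[OF _ finI, of ?N] TEin by blast
  show ?thesis
  proof (cases "card ?N \<le> 1")
    case True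
    have "1 \<le> (w+1)*d" using d1 by simp
    thus ?thesis using True by linarith
  next
    case False
    have ex: "\<exists>e. e \<in> E \<and> (\<exists>x' z. ends e = {x', z} \<and> x' \<in> priv t a \<and> z \<in> Y t)" if a: "a \<in> ?N" for a
    proof -
      have "\<not> (\<forall>a1\<in>?N. \<forall>a2\<in>?N. a1 = a2)" using False card_le_Suc0_iff_eq[OF finN] by simp
      then obtain b where b: "b \<in> ?N" "b \<noteq> a" using a by blast
      show ?thesis using two_nbrs[of t a b] a b by auto
    qed
    obtain ef where ef: "\<And>a. a \<in> ?N \<Longrightarrow> ef a \<in> E \<and> (\<exists>x' z. ends (ef a) = {x', z} \<and> x' \<in> priv t a \<and> z \<in> Y t)"
      using ex by metis
    have inj: "inj_on ef ?N"
    proof (rule inj_onI)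
      fix a b assume a: "a \<in> ?N" and b: "b \<in> ?N" and eq: "ef a = ef b"
      obtain xa za where A: "ends (ef a) = {xa, za}" "xa \<in> priv t a" "za \<in> Y t" using ef[OF a] by blast
      obtain xb zb where B: "ends (ef b) = {xb, zb}" "xb \<in> priv t b" "zb \<in> Y t" using ef[OF b] by blast
      have "xa \<notin> Y t" using A(2) unfolding priv_def by blast
      hence "xa \<noteq> zb" using B(3) by blast
      moreover have "xa \<in> {xb, zb}" using A(1) B(1) eq by simp
      ultimately have "xa = xb" by blast
      show "a = b"
      proof (rule ccontr)
        assume "a \<noteq> b"
        thus False using priv_disj[of t a b xa] a b A(2) B(2) \<open>xa = xb\<close> by simp
      qed
    qed
    have finY: "finite (Y t)" using finite_subset[OF Ysub[OF tI] finV] .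
    have img: "ef ` ?N \<subseteq> (\<Union>z\<in>Y t. {e\<in>E. z \<in> ends e})"
    proof
      fix e assume "e \<in> ef ` ?N"
      then obtain a where a: "a \<in> ?N" "e = ef a" by blast
      obtain xa za where A: "ends (ef a) = {xa, za}" "za \<in> Y t" using ef[OF a(1)] by blast
      show "e \<in> (\<Union>z\<in>Y t. {e\<in>E. z \<in> ends e})" using A a ef[OF a(1)] by blast
    qed
    have "card ?N = card (ef ` ?N)" using card_image[OF inj] by simp
    also have "\<dots> \<le> card (\<Union>z\<in>Y t. {e\<in>E. z \<in> ends e})"
      by (rule card_mono[OF finite_subset[OF _ finE] img]) auto
    also have "\<dots> \<le> (\<Sum>z\<in>Y t. card {e\<in>E. z \<in> ends e})" by (rule card_UN_le[OF finY])
    also have "\<dots> \<le> card (Y t) * d"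
    proof (rule sum_bounded_above[where K = d, simplified])
      fix z assume "z \<in> Y t"
      hence "z \<in> V" using Ysub[OF tI] by blast
      thus "card {e\<in>E. z \<in> ends e} \<le> d" using deg unfolding max_degree_le_def degree_def by blast
    qed
    also have "\<dots> \<le> (w+1) * d"
    proof -
      have "card (Y t) \<le> w+1" using wid tI unfolding td_width_le_def by simp
      thus ?thesis by (rule mult_le_mono1)
    qed
    finally show ?thesis .
  qed
qed

lemma nbr_bound_all: assumes "d \<ge> 1" shows "card {y. TE x y} \<le> (w+1)*d"
proof (cases "x \<in> I")
  case True thus ?thesis using nbr_bound assms by blast
next
  case False
  hence "{y. TE x y} = {}" using TEin by blast
  thus ?thesis by simp
qed

definition W where "W r k = {xs. length xs = Suc k \<and> hd xs = r \<and> successively TE xs}"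

lemma finN_all: "finite {y. TE x y}" using finite_subset[OF _ finI, of "{y. TE x y}"] TEin by blast

lemma W_count: assumes D: "\<And>x. card {y. TE x y} \<le> D" shows "finite (W r k) \<and> card (W r k) \<le> D^k"
proof (induction k)
  case 0
  have "W r 0 = {[r]}"
  proof (rule set_eqI)
    fix xs show "xs \<in> W r 0 \<longleftrightarrow> xs \<in> {[r]}" unfolding W_def by (cases xs) auto
  qed
  thus ?case by simp
next
  case (Suc k)
  have sub: "W r (Suc k) \<subseteq> (\<Union>xs\<in>W r k. (\<lambda>y. xs @ [y]) ` {y. TE (last xs) y})"
  proof
    fix zs assume zs: "zs \<in> W r (Suc k)"
    hence len: "length zs = Suc (Suc k)" and h: "hd zs = r" and s: "successively TE zs" unfolding W_def by auto
    have ne: "zs \<noteq> []" using len by auto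
    have dec: "zs = butlast zs @ [last zs]" using ne by simp
    have bne: "butlast zs \<noteq> []" using len by (cases zs) auto
    have s2: "successively TE (butlast zs) \<and> TE (last (butlast zs)) (last zs)"
      using s dec bne by (metis successively_append_iff list.distinct(1) list.sel(1))
    have "hd (butlast zs) = r" using h bne dec by (metis hd_append2)
    hence "butlast zs \<in> W r k" using s2 len unfolding W_def by simp
    thus "zs \<in> (\<Union>xs\<in>W r k. (\<lambda>y. xs @ [y]) ` {y. TE (last xs) y})" using s2 dec by blast
  qed
  have fin: "finite (\<Union>xs\<in>W r k. (\<lambda>y. xs @ [y]) ` {y. TE (last xs) y})"
    using Suc finN_all by blast
  have "card (W r (Suc k)) \<le> card (\<Union>xs\<in>W r k. (\<lambda>y. xs @ [y]) ` {y. TE (last xs) y})"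
    by (rule card_mono[OF fin sub])
  also have "\<dots> \<le> (\<Sum>xs\<in>W r k. card ((\<lambda>y. xs @ [y]) ` {y. TE (last xs) y}))"
    using card_UN_le Suc by blast
  also have "\<dots> \<le> card (W r k) * D"
  proof (rule sum_bounded_above[where K = D, simplified])
    fix xs
    show "card ((\<lambda>y. xs @ [y]) ` {y. TE (last xs) y}) \<le> D"
      using card_image_le[OF finN_all, of "\<lambda>y. xs @ [y]" "last xs"] D[of "last xs"] by linarith
  qed
  also have "\<dots> \<le> D^k * D" using Suc by simp
  finally show ?case using finite_subset[OF sub fin] by (simp add: mult.commute)
qed

lemma all_short: assumes D: "\<And>x. card {y. TE x y} \<le> D"
  and short: "\<forall>xs. is_path TE I xs \<longrightarrow> length xs < L"
  shows "card I \<le> L * (D+1)^L"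
proof -
  have "I \<noteq> {}" using tree unfolding is_tree_def by blast
  then obtain r where r: "r \<in> I" by blast
  have sub: "I \<subseteq> (\<Union>k\<in>{..<L}. last ` W r k)"
  proof
    fix u assume u: "u \<in> I"
    obtain xs where xs: "is_path TE I xs" "hd xs = r" "last xs = u" using tconn[OF r u] unfolding reach_def by blast
    have ne: "xs \<noteq> []" and s: "successively TE xs" using xs(1) unfolding is_path_succ by auto
    have "length xs < L" using short xs(1) by blast
    moreover have "xs \<in> W r (length xs - 1)" unfolding W_def using ne s xs(2) by simp
    ultimately show "u \<in> (\<Union>k\<in>{..<L}. last ` W r k)" using xs(3)
      by (intro UN_I[of "length xs - 1"]) auto
  qed
  have "card I \<le> card (\<Union>k\<in>{..<L}. last ` W r k)"
    by (rule card_mono[OF _ sub]) (use W_count[OF D] in blast)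
  also have "\<dots> \<le> (\<Sum>k<L. card (last ` W r k))" by (rule card_UN_le) simp
  also have "\<dots> \<le> (\<Sum>k<L. (D+1)^L)"
  proof (rule sum_mono)
    fix k assume "k \<in> {..<L}"
    hence kL: "k \<le> L" by simp
    have "card (last ` W r k) \<le> card (W r k)" using card_image_le W_count[OF D] by blast
    also have "\<dots> \<le> D^k" using W_count[OF D] by blast
    also have "\<dots> \<le> (D+1)^k" by (rule power_mono) simp_all
    also have "\<dots> \<le> (D+1)^L" by (rule power_increasing[OF kL]) simp
    finally show "card (last ` W r k) \<le> (D+1)^L" .
  qed
  also have "\<dots> = L * (D+1)^L" by simp
  finally show ?thesis .
qed

lemma cardV: "card V \<le> (w+1) * card I"
proof -
  have "card V \<le> (\<Sum>t\<in>I. card (Y t))" unfolding VY by (rule card_UN_le[OF finI])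
  also have "\<dots> \<le> card I * (w+1)"
    using sum_bounded_above[of I "\<lambda>t. card (Y t)" "w+1"] wid unfolding td_width_le_def by simp
  finally show ?thesis by (simp add: mult.commute)
qed

lemma path_interp: assumes p: "is_path TE I xs" and ijk: "i < j" "j < k" "k < length xs"
  shows "Y (xs!i) \<inter> Y (xs!k) \<subseteq> Y (xs!j)"
proof -
  define zs where "zs = drop i (take (Suc k) xs)"
  have lz: "length zs = Suc k - i" unfolding zs_def using ijk by simp
  have nz: "\<And>l. l < length zs \<Longrightarrow> zs ! l = xs ! (i + l)" unfolding zs_def using ijk by simp
  have zsne: "zs \<noteq> []" using lz ijk by auto
  have "is_path TE I zs"
    unfolding is_path_def
  proof (intro conjI allI impI)
    show "zs \<noteq> []" using lz ijk by auto
    show "distinct zs" using p unfolding is_path_def zs_def by simp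
    show "set zs \<subseteq> I" using p unfolding is_path_def zs_def
      by (meson order.trans set_drop_subset set_take_subset)
    fix l assume l: "Suc l < length zs"
    hence "Suc (i + l) < length xs" using lz ijk by simp
    hence "TE (xs ! (i + l)) (xs ! Suc (i + l))" using p unfolding is_path_def by blast
    thus "TE (zs ! l) (zs ! Suc l)" using nz l by simp
  qed
  moreover have "hd zs = xs ! i" using nz[of 0] zsne by (simp add: hd_conv_nth)
  moreover have "last zs = xs ! k" using nz[of "length zs - 1"] lz ijk zsne by (simp add: last_conv_nth)
  moreover have "xs ! j \<in> set zs"
  proof -
    have jl: "j - i < length zs" using lz ijk by simp
    hence "zs ! (j - i) \<in> set zs" by simp
    moreover have "zs ! (j - i) = xs ! j" using nz[OF jl] ijk by simp
    ultimately show ?thesis by simp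
  qed
  ultimately have "on_tree_path I TE (xs!i) (xs!k) (xs!j)" unfolding on_tree_path_def by blast
  moreover have "xs!i \<in> I" "xs!k \<in> I" using p ijk unfolding is_path_def by auto
  ultimately show ?thesis using W2 by blast
qed

end


context setting begin

lemma nth_in: "set xs \<subseteq> A \<Longrightarrow> k < length xs \<Longrightarrow> xs ! k \<in> A"
  using nth_mem by blast

lemma main:
  fixes n :: nat
  defines "m \<equiv> Nf n (w+1)"
  defines "M \<equiv> Rm m (w+1)"
  defines "L \<equiv> M + 2"
  defines "D \<equiv> (w+1)*d"
  assumes n1: "n \<ge> 1" and d1: "d \<ge> 1" and big: "card V > (w+1) * (L * (D+1)^L)"
  shows "\<exists>xs (idx :: nat \<Rightarrow> nat). is_path TE I xs \<and>
         (\<forall>i\<in>{1..n}. 0 < idx i \<and> Suc (idx i) < length xs) \<and>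
         (\<forall>i\<in>{1..n}. \<forall>j\<in>{1..n}. i < j \<longrightarrow> idx i < idx j) \<and>
         (\<exists>s. 0 < s \<and> s \<le> w + 1 \<and>
            (\<forall>i\<in>{1..n}. card (Y (xs ! idx i)) = s) \<and>
            (\<forall>k. idx 1 \<le> k \<and> k \<le> idx n \<longrightarrow> card (Y (xs ! k)) \<ge> s)) \<and>
         (\<exists>U \<subseteq> V. \<forall>i\<in>{1..n}. \<forall>j\<in>{1..n}. i \<noteq> j \<longrightarrow>
            Y (xs ! idx i) \<inter> Y (xs ! idx j) = U)"
proof -
  have "\<exists>xs. is_path TE I xs \<and> length xs \<ge> L"
  proof (rule ccontr)
    assume "\<not> ?thesis"
    hence short: "\<forall>xs. is_path TE I xs \<longrightarrow> length xs < L" by auto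
    have "card I \<le> L * (D+1)^L" using all_short[OF _ short] nbr_bound_all[OF d1] unfolding D_def by blast
    hence "(w+1) * card I \<le> (w+1) * (L * (D+1)^L)" by (rule mult_le_mono2)
    thus False using cardV big by linarith
  qed
  then obtain xs where p: "is_path TE I xs" and lenxs: "length xs \<ge> L" by blast
  have dist: "distinct xs" and sxs: "successively TE xs" and setxs: "set xs \<subseteq> I"
    using p unfolding is_path_succ by auto
  define g where "g k = card (Y (xs ! k))" for k
  have gprop: "\<forall>k. 1 \<le> k \<and> k < 1 + M \<longrightarrow> 0 < g k \<and> g k \<le> 0 + (w+1)"
  proof (intro allI impI)
    fix k assume k: "1 \<le> k \<and> k < 1 + M"
    have kl: "Suc k < length xs" using k lenxs unfolding L_def by simp
    have "k < length xs" using kl by simp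
    hence "xs ! k \<in> set xs" by (rule nth_mem)
    hence kI: "xs ! k \<in> I" using setxs by blast
    have t1: "TE (xs ! (k - 1)) (xs ! k)" using successively_nth[OF sxs, of "k - 1"] k kl by simp
    have t2: "TE (xs ! k) (xs ! Suc k)" using successively_nth[OF sxs, of k] kl by simp
    have ne: "xs ! (k - 1) \<noteq> xs ! Suc k" using nth_eq_iff_index_eq[OF dist, of "k - 1" "Suc k"] kl by simp
    have "Y (xs ! k) \<noteq> {}" using nonempty_bag[OF TEsym[OF t1] t2 ne] .
    moreover have "finite (Y (xs ! k))" using finite_subset[OF Ysub[OF kI] finV] .
    ultimately have "0 < g k" unfolding g_def by (simp add: card_gt_0_iff)
    moreover have "g k \<le> w + 1" using wid kI unfolding td_width_le_def g_def by simp
    ultimately show "0 < g k \<and> g k \<le> 0 + (w+1)" by simp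
  qed
  obtain s K where sK: "0 < s" "K \<subseteq> {1..<1+M}" "card K = m" "\<forall>k\<in>K. g k = s"
    "\<forall>k i j. i \<in> K \<longrightarrow> j \<in> K \<longrightarrow> i \<le> k \<longrightarrow> k \<le> j \<longrightarrow> s \<le> g k"
    using minram[of m "w+1" M 1 0 g] gprop unfolding M_def by blast
  have finK: "finite K" using finite_subset[OF sK(2)] by simp
  have Kl: "\<And>k. k \<in> K \<Longrightarrow> 0 < k \<and> Suc k < length xs" using sK(2) lenxs unfolding L_def by auto
  obtain K' U where K': "K' \<subseteq> K" "card K' = n" "\<forall>i\<in>K'. \<forall>j\<in>K'. i \<noteq> j \<longrightarrow> Y (xs!i) \<inter> Y (xs!j) = U"
  proof -
    have "\<exists>K'\<subseteq>K. card K' = n \<and> (\<exists>U. \<forall>i\<in>K'. \<forall>j\<in>K'. i \<noteq> j \<longrightarrow> (\<lambda>k. Y (xs!k)) i \<inter> (\<lambda>k. Y (xs!k)) j = U)"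
    proof (rule sunfl[OF n1 finK])
      show "Nf n (w+1) \<le> card K" using sK(3) unfolding m_def by simp
      show "\<forall>k\<in>K. finite (Y (xs!k)) \<and> card (Y (xs!k)) \<le> w+1"
      proof
        fix k assume "k \<in> K"
        hence "k < length xs" using Kl by fastforce
        hence kI: "xs ! k \<in> I" using nth_in[OF setxs] by blast
        show "finite (Y (xs!k)) \<and> card (Y (xs!k)) \<le> w+1"
          using finite_subset[OF Ysub[OF kI] finV] wid kI unfolding td_width_le_def by simp
      qed
      show "\<forall>i\<in>K. \<forall>j\<in>K. \<forall>k\<in>K. i < j \<longrightarrow> j < k \<longrightarrow> Y (xs!i) \<inter> Y (xs!k) \<subseteq> Y (xs!j)"
      proof (intro ballI impI)
        fix i j k assume "i \<in> K" "j \<in> K" "k \<in> K" "i < j" "j < k"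
        thus "Y (xs!i) \<inter> Y (xs!k) \<subseteq> Y (xs!j)" using path_interp[OF p] Kl by (meson Suc_lessD)
      qed
    qed
    thus ?thesis using that by blast
  qed
  define ys where "ys = sorted_list_of_set K'"
  have finK': "finite K'" using finite_subset[OF K'(1) finK] .
  have lys: "length ys = n" unfolding ys_def using K'(2) finK' by simp
  have sys: "set ys = K'" unfolding ys_def using finK' by simp
  have srt: "sorted_wrt (<) ys" unfolding ys_def by (rule strict_sorted_list_of_set)
  have dys: "distinct ys" unfolding ys_def by simp
  define idx where "idx i = ys ! (i - 1)" for i
  have idxK: "idx i \<in> K" if "i \<in> {1..n}" for i
  proof -
    have "i - 1 < length ys" using that lys by auto
    hence "idx i \<in> set ys" unfolding idx_def by simp
    thus ?thesis using sys K'(1) by blast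
  qed
  have idxK': "idx i \<in> K'" if "i \<in> {1..n}" for i
  proof -
    have "i - 1 < length ys" using that lys by auto
    hence "idx i \<in> set ys" unfolding idx_def by simp
    thus ?thesis using sys by blast
  qed
  have mono: "idx i < idx j" if "i \<in> {1..n}" "j \<in> {1..n}" "i < j" for i j
    unfolding idx_def using sorted_wrt_nth_less[OF srt, of "i - 1" "j - 1"] that lys by auto
  have inj: "idx i \<noteq> idx j" if "i \<in> {1..n}" "j \<in> {1..n}" "i \<noteq> j" for i j
  proof -
    have a: "i - 1 < length ys" "j - 1 < length ys" "i - 1 \<noteq> j - 1" using that lys by auto
    show ?thesis unfolding idx_def using nth_eq_iff_index_eq[OF dys a(1) a(2)] a(3) by simp
  qed
  have n1in: "1 \<in> {1..n}" "n \<in> {1..n}" using n1 by auto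
  show ?thesis
  proof (intro exI[of _ xs] exI[of _ idx] conjI)
    show "is_path TE I xs" by (rule p)
    show "\<forall>i\<in>{1..n}. 0 < idx i \<and> Suc (idx i) < length xs" using idxK Kl by blast
    show "\<forall>i\<in>{1..n}. \<forall>j\<in>{1..n}. i < j \<longrightarrow> idx i < idx j" using mono by blast
    show "\<exists>s. 0 < s \<and> s \<le> w + 1 \<and>
            (\<forall>i\<in>{1..n}. card (Y (xs ! idx i)) = s) \<and>
            (\<forall>k. idx 1 \<le> k \<and> k \<le> idx n \<longrightarrow> card (Y (xs ! k)) \<ge> s)"
    proof (intro exI[of _ s] conjI)
      show "0 < s" by (rule sK(1))
      have "idx 1 \<in> K" using idxK n1in by blast
      hence "g (idx 1) = s" using sK(4) by blast
      moreover have "g (idx 1) \<le> w + 1" using gprop sK(2) \<open>idx 1 \<in> K\<close> by auto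
      ultimately show "s \<le> w + 1" by simp
      show "\<forall>i\<in>{1..n}. card (Y (xs ! idx i)) = s" using idxK sK(4) unfolding g_def by blast
      show "\<forall>k. idx 1 \<le> k \<and> k \<le> idx n \<longrightarrow> card (Y (xs ! k)) \<ge> s"
        using sK(5) idxK n1in unfolding g_def by blast
    qed
    show "\<exists>U \<subseteq> V. \<forall>i\<in>{1..n}. \<forall>j\<in>{1..n}. i \<noteq> j \<longrightarrow> Y (xs ! idx i) \<inter> Y (xs ! idx j) = U"
    proof (intro exI[of _ "U \<inter> V"] conjI ballI impI)
      show "U \<inter> V \<subseteq> V" by blast
      fix i j assume ij: "i \<in> {1..n}" "j \<in> {1..n}" "i \<noteq> j"
      have eq: "Y (xs ! idx i) \<inter> Y (xs ! idx j) = U"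
        using K'(3) idxK'[OF ij(1)] idxK'[OF ij(2)] inj[OF ij] by blast
      have "idx i < length xs" using idxK[OF ij(1)] Kl by fastforce
      hence "xs ! idx i \<in> I" using nth_in[OF setxs] by blast
      hence "Y (xs ! idx i) \<subseteq> V" by (rule Ysub)
      thus "Y (xs ! idx i) \<inter> Y (xs ! idx j) = U \<inter> V" using eq by blast
    qed
  qed
qed

end


definition Fb :: "nat \<Rightarrow> nat \<Rightarrow> nat \<Rightarrow> nat" where
  "Fb n w d = (w+1) * ((Rm (Nf n (w+1)) (w+1) + 2) * ((w+1)*d+1)^(Rm (Nf n (w+1)) (w+1) + 2)) + 1"

lemma final_helper:
  assumes "n > 0 \<and> w > 0 \<and> d > 0"
  and "multigraph V E ends \<and> connected_graph V E ends \<and> max_degree_le V E ends d \<and>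
      lean_tree_decomposition V E ends I TE Y \<and> td_width_le I Y w \<and>
      card V \<ge> Fb n w d"
  shows "(\<exists>xs (idx :: nat \<Rightarrow> nat). is_path TE I xs \<and>
         (\<forall>i\<in>{1..n}. 0 < idx i \<and> Suc (idx i) < length xs) \<and>
         (\<forall>i\<in>{1..n}. \<forall>j\<in>{1..n}. i < j \<longrightarrow> idx i < idx j) \<and>
         (\<exists>s. 0 < s \<and> s \<le> w + 1 \<and>
            (\<forall>i\<in>{1..n}. card (Y (xs ! idx i)) = s) \<and>
            (\<forall>k. idx 1 \<le> k \<and> k \<le> idx n \<longrightarrow> card (Y (xs ! k)) \<ge> s)) \<and>
         (\<exists>U \<subseteq> V. \<forall>i\<in>{1..n}. \<forall>j\<in>{1..n}. i \<noteq> j \<longrightarrow>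
            Y (xs ! idx i) \<inter> Y (xs ! idx j) = U))"
proof -
  have lean: "lean_tree_decomposition V E ends I TE Y" using assms(2) by blast
  interpret setting V E ends I TE Y w d
  proof
    show "multigraph V E ends" "connected_graph V E ends" "max_degree_le V E ends d" "td_width_le I Y w"
      using assms(2) by blast+
    show "tree_decomposition V E ends I TE Y" using lean unfolding lean_tree_decomposition_def by blast
    show "\<forall>t0\<in>I. \<forall>B\<in>tree_minus_components I TE t0. \<Union> (Y ` B) - Y t0 \<noteq> {}"
      using lean unfolding lean_tree_decomposition_def by blast
  qed
  have "card V \<ge> Fb n w d" using assms(2) by blast
  hence big: "card V > (w+1) * ((Rm (Nf n (w+1)) (w+1) + 2) * ((w+1)*d+1)^(Rm (Nf n (w+1)) (w+1) + 2))"
    unfolding Fb_def by simp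
  show ?thesis by (rule main[OF _ _ big]) (use assms(1) in auto)
qed

theorem lemma6p4:
  shows "\<exists>f :: nat \<Rightarrow> nat \<Rightarrow> nat \<Rightarrow> nat. \<forall>n w d. n > 0 \<and> w > 0 \<and> d > 0 \<longrightarrow>
    (\<forall>(V :: nat set) (E :: nat set) (ends :: nat \<Rightarrow> nat set) (I :: nat set)
       (TE :: nat \<Rightarrow> nat \<Rightarrow> bool) (Y :: nat \<Rightarrow> nat set).
      multigraph V E ends \<and> connected_graph V E ends \<and> max_degree_le V E ends d \<and>
      lean_tree_decomposition V E ends I TE Y \<and> td_width_le I Y w \<and>
      card V \<ge> f n w d \<longrightarrow>
      (\<exists>xs (idx :: nat \<Rightarrow> nat). is_path TE I xs \<and>
         (\<forall>i\<in>{1..n}. 0 < idx i \<and> Suc (idx i) < length xs) \<and>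
         (\<forall>i\<in>{1..n}. \<forall>j\<in>{1..n}. i < j \<longrightarrow> idx i < idx j) \<and>
         (\<exists>s. 0 < s \<and> s \<le> w + 1 \<and>
            (\<forall>i\<in>{1..n}. card (Y (xs ! idx i)) = s) \<and>
            (\<forall>k. idx 1 \<le> k \<and> k \<le> idx n \<longrightarrow> card (Y (xs ! k)) \<ge> s)) \<and>
         (\<exists>U \<subseteq> V. \<forall>i\<in>{1..n}. \<forall>j\<in>{1..n}. i \<noteq> j \<longrightarrow>
            Y (xs ! idx i) \<inter> Y (xs ! idx j) = U)))"
  apply (rule exI[of _ Fb])
  apply (intro allI impI)
  apply (rule final_helper)
   apply assumption+
  done


end
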